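(* There is a deterministic, non-contractive, strict online embedding of points arriving one by one from any metric space into HSTs such that, for every $n$, after $n$ points have arrived every pair $u,v$ of them satisfies $d_T(u,v)\le 2^n d(u,v)$; i.e., it has distortion $2^n$ on $n$ points, and it requires no prior knowledge of $n$.
   Context: For $\mu\ge1$, a $\mu$-HST is the metric on the leaves of a rooted tree with node weights $\varphi\ge0$ ($\varphi(v)=0$ iff $v$ is a leaf, $\varphi(v)\le\varphi(u)/\mu$ when $v$ is a child of $u$), with leaf distance $d_T(u,v)=\varphi(\mathrm{lca}(u,v))$; "HSTs" is the family of such metrics. A strict online embedding receives points of $(X,d)$ one at a time and upon arrival of each point (depending only on points so far) outputs an HST metric $d_T$ on all points arrived so far, such that distances between previously arrived points never change. Non-contractive means $d_T(u,v)\ge d(u,v)$ for all arrived $u,v$. *)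

theory Defs
  imports "HOL-Analysis.Analysis"
begin

definition rooted_tree :: "nat set \<Rightarrow> nat \<Rightarrow> (nat \<Rightarrow> nat) \<Rightarrow> bool" where
  "rooted_tree V r p \<longleftrightarrow> finite V \<and> r \<in> V \<and> p r = r \<and>
     (\<forall>v\<in>V. v \<noteq> r \<longrightarrow> p v \<in> V) \<and> (\<forall>v\<in>V. \<exists>k. (p ^^ k) v = r)"

definition ancestors :: "(nat \<Rightarrow> nat) \<Rightarrow> nat \<Rightarrow> nat set" where
  "ancestors p v = {(p ^^ k) v | k. True}"

definition is_leaf :: "nat set \<Rightarrow> nat \<Rightarrow> (nat \<Rightarrow> nat) \<Rightarrow> nat \<Rightarrow> bool" where
  "is_leaf V r p v \<longleftrightarrow> v \<in> V \<and> \<not> (\<exists>c\<in>V. c \<noteq> r \<and> p c = v)"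

definition is_lca :: "(nat \<Rightarrow> nat) \<Rightarrow> nat \<Rightarrow> nat \<Rightarrow> nat \<Rightarrow> bool" where
  "is_lca p a b w \<longleftrightarrow> w \<in> ancestors p a \<inter> ancestors p b \<and>
     (\<forall>w' \<in> ancestors p a \<inter> ancestors p b. w' \<in> ancestors p w)"

definition hst_metric :: "real \<Rightarrow> 'a set \<Rightarrow> ('a \<Rightarrow> 'a \<Rightarrow> real) \<Rightarrow> bool" where
  "hst_metric \<mu> S D \<longleftrightarrow> (\<exists>V r p (leaf :: 'a \<Rightarrow> nat) (\<phi> :: nat \<Rightarrow> real).
     rooted_tree V r p \<and>
     bij_betw leaf S {v. is_leaf V r p v} \<and>
     (\<forall>v\<in>V. \<phi> v \<ge> 0 \<and> (\<phi> v = 0 \<longleftrightarrow> is_leaf V r p v)) \<and>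
     (\<forall>v\<in>V. v \<noteq> r \<longrightarrow> \<phi> v \<le> \<phi> (p v) / \<mu>) \<and>
     (\<forall>x\<in>S. \<forall>y\<in>S. \<exists>w. is_lca p (leaf x) (leaf y) w \<and> D x y = \<phi> w))"

definition is_HST_metric :: "'a set \<Rightarrow> ('a \<Rightarrow> 'a \<Rightarrow> real) \<Rightarrow> bool" where
  "is_HST_metric S D \<longleftrightarrow> (\<exists>\<mu>\<ge>1. hst_metric \<mu> S D)"

end

theory Submission
  imports Defs
begin


definition rtG :: "'b set \<Rightarrow> 'b \<Rightarrow> ('b \<Rightarrow> 'b) \<Rightarrow> bool" where
  "rtG V r p \<longleftrightarrow> finite V \<and> r \<in> V \<and> p r = r \<and>
     (\<forall>v\<in>V. v \<noteq> r \<longrightarrow> p v \<in> V) \<and> (\<forall>v\<in>V. \<exists>k. (p ^^ k) v = r)"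

definition ancG :: "('b \<Rightarrow> 'b) \<Rightarrow> 'b \<Rightarrow> 'b set" where
  "ancG p v = {(p ^^ k) v | k. True}"

definition leafG :: "'b set \<Rightarrow> 'b \<Rightarrow> ('b \<Rightarrow> 'b) \<Rightarrow> 'b \<Rightarrow> bool" where
  "leafG V r p v \<longleftrightarrow> v \<in> V \<and> \<not> (\<exists>c\<in>V. c \<noteq> r \<and> p c = v)"

definition lcaG :: "('b \<Rightarrow> 'b) \<Rightarrow> 'b \<Rightarrow> 'b \<Rightarrow> 'b \<Rightarrow> bool" where
  "lcaG p a b w \<longleftrightarrow> w \<in> ancG p a \<inter> ancG p b \<and>
     (\<forall>w' \<in> ancG p a \<inter> ancG p b. w' \<in> ancG p w)"

lemma rtG_closed:
  assumes "rtG V r p" "v \<in> V" shows "(p ^^ k) v \<in> V"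
proof (induction k)
  case 0 then show ?case using assms by simp
next
  case (Suc k)
  then show ?case using assms unfolding rtG_def by (cases "(p ^^ k) v = r") auto
qed

lemma ancG_sub: assumes "rtG V r p" "v \<in> V" shows "ancG p v \<subseteq> V"
  using rtG_closed[OF assms] by (auto simp: ancG_def)

lemma transport:
  fixes S :: "'a set" and V :: "'b set" and leaf :: "'a \<Rightarrow> 'b"
  assumes rt: "rtG V r p"
    and bl: "bij_betw leaf S {v. leafG V r p v}"
    and ph: "\<forall>v\<in>V. \<phi> v \<ge> 0 \<and> (\<phi> v = 0 \<longleftrightarrow> leafG V r p v)"
    and ph2: "\<forall>v\<in>V. v \<noteq> r \<longrightarrow> \<phi> v \<le> \<phi> (p v) / \<mu>"
    and lc: "\<forall>x\<in>S. \<forall>y\<in>S. \<exists>w. lcaG p (leaf x) (leaf y) w \<and> D x y = \<phi> w"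
  shows "hst_metric \<mu> S D"
proof -
  have fin: "finite V" using rt by (simp add: rtG_def)
  obtain g where g: "bij_betw g {0..<card V} V" using ex_bij_betw_nat_finite[OF fin] by blast
  define h where "h = inv_into {0..<card V} g"
  have h: "bij_betw h V {0..<card V}" unfolding h_def by (rule bij_betw_inv_into[OF g])
  have gh: "g (h v) = v" if "v \<in> V" for v
    unfolding h_def using g that by (meson bij_betw_inv_into_right)
  have hg: "h (g n) = n" if "n \<in> {0..<card V}" for n
    unfolding h_def using g that by (meson bij_betw_inv_into_left)
  have hinj: "inj_on h V" using h bij_betw_def by blast
  have hV: "h v \<in> {0..<card V}" if "v \<in> V" for v using h that bij_betwE by blast
  have gV: "g n \<in> V" if "n \<in> {0..<card V}" for n using g that bij_betwE by blast
  have rV: "r \<in> V" and pr: "p r = r" using rt by (auto simp: rtG_def)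
  have pV: "p v \<in> V" if "v \<in> V" for v using rt that pr rV by (cases "v = r") (auto simp: rtG_def)
  define p' where "p' = (\<lambda>n. h (p (g n)))"
  have it: "(p' ^^ k) (h v) = h ((p ^^ k) v)" if "v \<in> V" for v k
  proof (induction k)
    case 0 then show ?case by simp
  next
    case (Suc k)
    have "(p ^^ k) v \<in> V" using rtG_closed[OF rt that] .
    then show ?case using Suc by (simp add: p'_def gh)
  qed
  have anc: "ancestors p' (h v) = h ` ancG p v" if "v \<in> V" for v
    unfolding ancestors_def ancG_def using it[OF that] by auto
  have ancmem: "h u \<in> ancestors p' (h v) \<longleftrightarrow> u \<in> ancG p v" if "v \<in> V" "u \<in> V" for u v
    using anc[OF that(1)] ancG_sub[OF rt that(1)] hinj that(2) by (auto dest: inj_onD)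
  have rt': "rooted_tree {0..<card V} (h r) p'"
    unfolding rooted_tree_def
  proof (intro conjI ballI impI)
    show "h r \<in> {0..<card V}" using hV rV by blast
    show "p' (h r) = h r" using gh rV pr by (simp add: p'_def)
    fix n assume n: "n \<in> {0..<card V}"
    then have nn: "n = h (g n)" using hg by simp
    { assume "n \<noteq> h r" then show "p' n \<in> {0..<card V}" using hV[OF pV[OF gV[OF n]]] by (simp add: p'_def) }
    obtain k where "(p ^^ k) (g n) = r" using rt gV[OF n] by (auto simp: rtG_def)
    then have "(p' ^^ k) n = h r" using it[OF gV[OF n]] nn by simp
    then show "\<exists>k. (p' ^^ k) n = h r" by blast
  qed (simp)
  have leafeq: "is_leaf {0..<card V} (h r) p' (h v) \<longleftrightarrow> leafG V r p v" if "v \<in> V" for v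
  proof -
    have "(\<exists>c\<in>{0..<card V}. c \<noteq> h r \<and> p' c = h v) \<longleftrightarrow> (\<exists>c\<in>V. c \<noteq> r \<and> p c = v)"
    proof
      assume "\<exists>c\<in>{0..<card V}. c \<noteq> h r \<and> p' c = h v"
      then obtain c where c: "c \<in> {0..<card V}" "c \<noteq> h r" "h (p (g c)) = h v" by (auto simp: p'_def)
      have "p (g c) = v" using c(3) hinj pV[OF gV[OF c(1)]] that by (auto dest: inj_onD)
      moreover have "g c \<noteq> r" using c hg by auto
      ultimately show "\<exists>c\<in>V. c \<noteq> r \<and> p c = v" using gV[OF c(1)] by blast
    next
      assume "\<exists>c\<in>V. c \<noteq> r \<and> p c = v"
      then obtain c where c: "c \<in> V" "c \<noteq> r" "p c = v" by blast
      have "h c \<noteq> h r" using c hinj rV by (auto dest: inj_onD)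
      then show "\<exists>c\<in>{0..<card V}. c \<noteq> h r \<and> p' c = h v" using c hV gh by (auto simp: p'_def)
    qed
    then show ?thesis using that hV by (auto simp: is_leaf_def leafG_def)
  qed
  have leafset: "{n. is_leaf {0..<card V} (h r) p' n} = h ` {v. leafG V r p v}"
  proof (intro set_eqI iffI)
    fix n assume "n \<in> {n. is_leaf {0..<card V} (h r) p' n}"
    then have n: "n \<in> {0..<card V}" "is_leaf {0..<card V} (h r) p' (h (g n))"
      using hg by (auto simp: is_leaf_def)
    then show "n \<in> h ` {v. leafG V r p v}" using leafeq[OF gV[OF n(1)]] hg[OF n(1)]
      by (metis imageI mem_Collect_eq)
  next
    fix n assume "n \<in> h ` {v. leafG V r p v}"
    then obtain v where "leafG V r p v" "n = h v" by blast
    then show "n \<in> {n. is_leaf {0..<card V} (h r) p' n}" using leafeq by (auto simp: leafG_def)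
  qed
  have lsub: "{v. leafG V r p v} \<subseteq> V" by (auto simp: leafG_def)
  have bl': "bij_betw (h \<circ> leaf) S {n. is_leaf {0..<card V} (h r) p' n}"
    unfolding leafset
    by (rule bij_betw_trans[OF bl]) (meson bij_betw_subset h lsub)
  show ?thesis unfolding hst_metric_def
  proof (intro exI conjI)
    show "rooted_tree {0..<card V} (h r) p'" by (rule rt')
    show "bij_betw (h \<circ> leaf) S {n. is_leaf {0..<card V} (h r) p' n}" by (rule bl')
    show "\<forall>v\<in>{0..<card V}. (\<phi> \<circ> g) v \<ge> 0 \<and> ((\<phi> \<circ> g) v = 0 \<longleftrightarrow> is_leaf {0..<card V} (h r) p' v)"
      using ph leafeq gV hg by fastforce
    show "\<forall>v\<in>{0..<card V}. v \<noteq> h r \<longrightarrow> (\<phi> \<circ> g) v \<le> (\<phi> \<circ> g) (p' v) / \<mu>"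
      using ph2 gV hg gh pV by (fastforce simp: p'_def)
    show "\<forall>x\<in>S. \<forall>y\<in>S. \<exists>w. is_lca p' ((h \<circ> leaf) x) ((h \<circ> leaf) y) w \<and> D x y = (\<phi> \<circ> g) w"
    proof (intro ballI)
      fix x y assume xy: "x \<in> S" "y \<in> S"
      obtain w where w: "lcaG p (leaf x) (leaf y) w" "D x y = \<phi> w" using lc xy by blast
      have lx: "leaf x \<in> V" "leaf y \<in> V" using bl xy lsub bij_betwE by blast+
      have wV: "w \<in> V" using w(1) ancG_sub[OF rt lx(1)] by (auto simp: lcaG_def)
      have A: "ancestors p' (h a) = h ` ancG p a" if "a \<in> V" for a using anc that by blast
      have "is_lca p' (h (leaf x)) (h (leaf y)) (h w)"
        unfolding is_lca_def
      proof (intro conjI ballI)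
        show "h w \<in> ancestors p' (h (leaf x)) \<inter> ancestors p' (h (leaf y))"
          using w(1) ancmem lx wV by (auto simp: lcaG_def)
        fix w' assume w': "w' \<in> ancestors p' (h (leaf x)) \<inter> ancestors p' (h (leaf y))"
        then obtain u where u: "u \<in> ancG p (leaf x)" "w' = h u" using A[OF lx(1)] by auto
        have uV: "u \<in> V" using u ancG_sub[OF rt lx(1)] by blast
        have "u \<in> ancG p (leaf y)" using w' u ancmem[OF lx(2) uV] by auto
        then have "u \<in> ancG p w" using w(1) u by (auto simp: lcaG_def)
        then show "w' \<in> ancestors p' (h w)" using ancmem[OF wV uV] u by simp
      qed
      then show "\<exists>w. is_lca p' ((h \<circ> leaf) x) ((h \<circ> leaf) y) w \<and> D x y = (\<phi> \<circ> g) w"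
        using w(2) gh wV by auto
    qed
  qed
qed



locale ultra =
  fixes S :: "'a set" and D :: "'a \<Rightarrow> 'a \<Rightarrow> real"
  assumes fin: "finite S" and ne: "S \<noteq> {}"
    and refl0: "\<And>x. x \<in> S \<Longrightarrow> D x x = 0"
    and pos: "\<And>x y. x \<in> S \<Longrightarrow> y \<in> S \<Longrightarrow> x \<noteq> y \<Longrightarrow> D x y > 0"
    and sym: "\<And>x y. x \<in> S \<Longrightarrow> y \<in> S \<Longrightarrow> D x y = D y x"
    and ultr: "\<And>x y z. x \<in> S \<Longrightarrow> y \<in> S \<Longrightarrow> z \<in> S \<Longrightarrow> D x z \<le> max (D x y) (D y z)"
begin

lemma nonneg: "x \<in> S \<Longrightarrow> y \<in> S \<Longrightarrow> D x y \<ge> 0"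
  using refl0 pos by (metis less_eq_real_def)

definition bl :: "'a \<Rightarrow> real \<Rightarrow> 'a set" where "bl c r = {z\<in>S. D c z \<le> r}"

definition Balls :: "'a set set" where "Balls = {bl c (D c z) | c z. c \<in> S \<and> z \<in> S}"

lemma Balls_fin: "finite Balls"
proof -
  have "Balls = (\<lambda>(c,z). bl c (D c z)) ` (S \<times> S)" unfolding Balls_def by auto
  then show ?thesis using fin by simp
qed

lemma bl_sub: "bl c r \<subseteq> S" by (auto simp: bl_def)

lemma Balls_sub: "B \<in> Balls \<Longrightarrow> B \<subseteq> S" by (auto simp: Balls_def bl_def)

lemma Balls_ne: "B \<in> Balls \<Longrightarrow> B \<noteq> {}"
  unfolding Balls_def bl_def using nonneg refl0 by fastforce

lemma bl_recenter: assumes "c \<in> S" "w \<in> S" "D c w \<le> r" shows "bl c r = bl w r"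
proof -
  have "D c z \<le> r \<longleftrightarrow> D w z \<le> r" if "z \<in> S" for z
    using ultr[OF assms(1,2) that] ultr[of w c z] assms that sym[of c w] by fastforce
  then show ?thesis by (auto simp: bl_def)
qed

lemma laminar: assumes "B1 \<in> Balls" "B2 \<in> Balls" "B1 \<inter> B2 \<noteq> {}"
  shows "B1 \<subseteq> B2 \<or> B2 \<subseteq> B1"
proof -
  obtain c1 z1 where 1: "c1 \<in> S" "B1 = bl c1 (D c1 z1)" using assms(1) by (auto simp: Balls_def)
  obtain c2 z2 where 2: "c2 \<in> S" "B2 = bl c2 (D c2 z2)" using assms(2) by (auto simp: Balls_def)
  obtain w where w: "w \<in> B1" "w \<in> B2" using assms(3) by blast
  have wS: "w \<in> S" using w 1 by (auto simp: bl_def)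
  have e1: "B1 = bl w (D c1 z1)" using 1 w bl_recenter[OF 1(1) wS] by (auto simp: bl_def)
  have e2: "B2 = bl w (D c2 z2)" using 2 w bl_recenter[OF 2(1) wS] by (auto simp: bl_def)
  show ?thesis
  proof (cases "D c1 z1 \<le> D c2 z2")
    case True then show ?thesis using e1 e2 by (auto simp: bl_def)
  next
    case False then show ?thesis using e1 e2 by (auto simp: bl_def)
  qed
qed

lemma S_Ball: "S \<in> Balls"
proof -
  obtain c where c: "c \<in> S" using ne by blast
  define m where "m = Max (D c ` S)"
  have "m \<in> D c ` S" unfolding m_def using fin ne by simp
  then obtain z where z: "z \<in> S" "m = D c z" by blast
  have "bl c m = S" unfolding bl_def m_def using fin by auto
  then show ?thesis unfolding Balls_def using c z by blast
qed

lemma single_Ball: assumes "a \<in> S" shows "{a} \<in> Balls"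
proof -
  have "bl a (D a a) = {a}" unfolding bl_def using assms refl0 pos by force
  then show ?thesis unfolding Balls_def using assms by blast
qed

definition par :: "'a set \<Rightarrow> 'a set" where
  "par B = (if B = S then S else (SOME C. C \<in> Balls \<and> B \<subset> C \<and> (\<forall>C'\<in>Balls. B \<subset> C' \<longrightarrow> C \<subseteq> C')))"

lemma par_ex: assumes "B \<in> Balls" "B \<noteq> S"
  shows "\<exists>C. C \<in> Balls \<and> B \<subset> C \<and> (\<forall>C'\<in>Balls. B \<subset> C' \<longrightarrow> C \<subseteq> C')"
proof -
  define U where "U = {C\<in>Balls. B \<subset> C}"
  have Ufin: "finite U" using Balls_fin U_def by simp
  have "S \<in> U" using S_Ball assms Balls_sub unfolding U_def by blast
  then have Une: "U \<noteq> {}" by blast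
  define m where "m = Min (card ` U)"
  have "m \<in> card ` U" unfolding m_def using Ufin Une by simp
  then obtain C where C: "C \<in> U" "card C = m" by blast
  have "C \<subseteq> C'" if "C' \<in> Balls" "B \<subset> C'" for C'
  proof (rule ccontr)
    assume nc: "\<not> C \<subseteq> C'"
    have "C \<inter> C' \<noteq> {}" using C(1) that Balls_ne[OF assms(1)] unfolding U_def by blast
    then have "C' \<subset> C" using laminar[OF _ that(1)] C(1) nc unfolding U_def by blast
    moreover have "finite C" using C(1) Balls_sub fin finite_subset unfolding U_def by blast
    ultimately have "card C' < card C" using psubset_card_mono by blast
    moreover have "card C' \<ge> m" unfolding m_def using that Ufin U_def by simp
    ultimately show False using C by simp
  qed
  then show ?thesis using C unfolding U_def by blast
qed

lemma par_props: assumes "B \<in> Balls" "B \<noteq> S"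
  shows "par B \<in> Balls" "B \<subset> par B" "\<And>C'. C' \<in> Balls \<Longrightarrow> B \<subset> C' \<Longrightarrow> par B \<subseteq> C'"
  using someI_ex[OF par_ex[OF assms]] assms(2) unfolding par_def by auto

lemma par_Balls: "B \<in> Balls \<Longrightarrow> par B \<in> Balls"
  using par_props S_Ball by (cases "B = S") (auto simp: par_def)

lemma par_sup: "B \<in> Balls \<Longrightarrow> B \<subseteq> par B"
  using par_props by (cases "B = S") (auto simp: par_def)

lemma iter_Balls: "B \<in> Balls \<Longrightarrow> (par ^^ k) B \<in> Balls \<and> B \<subseteq> (par ^^ k) B"
  by (induction k) (auto intro: par_Balls dest: par_sup)

lemma reach: "B \<in> Balls \<Longrightarrow> C \<in> Balls \<Longrightarrow> B \<subseteq> C \<Longrightarrow> \<exists>k. (par ^^ k) B = C"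
proof (induction "card (S - B)" arbitrary: B rule: less_induct)
  case less
  show ?case
  proof (cases "B = C")
    case True then show ?thesis by (metis funpow_0)
  next
    case False
    then have BS: "B \<noteq> S" using less Balls_sub by blast
    have pb: "par B \<in> Balls" "B \<subset> par B" "par B \<subseteq> C" using par_props[OF less(2) BS] less False by auto
    have "card (S - par B) < card (S - B)"
      using pb Balls_sub[OF pb(1)] fin by (intro psubset_card_mono) auto
    then obtain k where "(par ^^ k) (par B) = C" using less pb by blast
    then show ?thesis by (metis funpow_Suc_right o_apply)
  qed
qed

lemma anc_eq: "B \<in> Balls \<Longrightarrow> ancG par B = {C\<in>Balls. B \<subseteq> C}"
  unfolding ancG_def using iter_Balls reach by blast

lemma rt: "rtG Balls S par"
  unfolding rtG_def
proof (intro conjI ballI impI)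
  show "par S = S" by (simp add: par_def)
  fix v assume "v \<in> Balls"
  then show "par v \<in> Balls" "\<exists>k. (par ^^ k) v = S" using par_Balls reach Balls_sub S_Ball by auto
qed (use Balls_fin S_Ball in auto)

lemma leaf_iff: "leafG Balls S par B \<longleftrightarrow> (\<exists>a\<in>S. B = {a})"
proof
  assume L: "leafG Balls S par B"
  then have B: "B \<in> Balls" by (simp add: leafG_def)
  then obtain a where a: "a \<in> B" using Balls_ne by blast
  show "\<exists>a\<in>S. B = {a}"
  proof (rule ccontr)
    assume ns: "\<not> (\<exists>a\<in>S. B = {a})"
    define W where "W = {C\<in>Balls. a \<in> C \<and> C \<subset> B}"
    have aS: "a \<in> S" using a B Balls_sub by blast
    have "{a} \<in> W" unfolding W_def using single_Ball[OF aS] a ns aS by auto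
    have Wfin: "finite W" using Balls_fin W_def by simp
    define m where "m = Max (card ` W)"
    have "m \<in> card ` W" unfolding m_def using Wfin \<open>{a} \<in> W\<close> by (intro Max_in) auto
    then obtain C where C: "C \<in> W" "card C = m" by blast
    have CS: "C \<noteq> S" using C Balls_sub[OF B] unfolding W_def by blast
    have CB: "C \<in> Balls" "C \<subset> B" "a \<in> C" using C W_def by auto
    note pp = par_props[OF CB(1) CS]
    have pB: "par C \<subseteq> B" using pp(3)[OF B CB(2)] .
    have "par C = B"
    proof (rule ccontr)
      assume "par C \<noteq> B"
      then have "par C \<in> W" using pB pp CB unfolding W_def by auto
      then have "card (par C) \<le> m" unfolding m_def using Wfin by simp
      moreover have "card C < card (par C)" using pp(2) Balls_sub[OF pp(1)] fin
        by (meson finite_subset psubset_card_mono)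
      ultimately show False using C by simp
    qed
    then show False using L CB CS unfolding leafG_def by blast
  qed
next
  assume "\<exists>a\<in>S. B = {a}"
  then obtain a where a: "a \<in> S" "B = {a}" by blast
  have "\<not> (\<exists>c\<in>Balls. c \<noteq> S \<and> par c = B)"
  proof
    assume "\<exists>c\<in>Balls. c \<noteq> S \<and> par c = B"
    then obtain c where c: "c \<in> Balls" "c \<noteq> S" "par c = {a}" using a by blast
    then have "c \<subset> {a}" using par_props(2)[OF c(1,2)] by simp
    then show False using Balls_ne[OF c(1)] by blast
  qed
  then show "leafG Balls S par B" using single_Ball a unfolding leafG_def by blast
qed

definition diam :: "'a set \<Rightarrow> real" where "diam B = Max ((\<lambda>(x,y). D x y) ` (B \<times> B))"

lemma diam_ge: "B \<subseteq> S \<Longrightarrow> x \<in> B \<Longrightarrow> y \<in> B \<Longrightarrow> D x y \<le> diam B"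
  unfolding diam_def using fin by (intro Max_ge) (auto intro: finite_subset)

lemma diam_attained: "B \<subseteq> S \<Longrightarrow> B \<noteq> {} \<Longrightarrow> \<exists>x\<in>B. \<exists>y\<in>B. diam B = D x y"
proof -
  assume a: "B \<subseteq> S" "B \<noteq> {}"
  have "finite ((\<lambda>(x,y). D x y) ` (B \<times> B))" using a fin by (auto intro: finite_subset)
  moreover have "(\<lambda>(x,y). D x y) ` (B \<times> B) \<noteq> {}" using a by auto
  ultimately have "diam B \<in> (\<lambda>(x,y). D x y) ` (B \<times> B)" unfolding diam_def by (rule Max_in)
  then show ?thesis by auto
qed

lemma diam_mono: "A \<subseteq> B \<Longrightarrow> B \<subseteq> S \<Longrightarrow> A \<noteq> {} \<Longrightarrow> diam A \<le> diam B"
  using diam_attained[of A] diam_ge[of B] by (metis subset_trans subsetD)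

lemma lca_ball: assumes "x \<in> S" "y \<in> S"
  shows "lcaG par {x} {y} (bl x (D x y)) \<and> D x y = diam (bl x (D x y))"
proof -
  let ?w = "bl x (D x y)"
  have wB: "?w \<in> Balls" unfolding Balls_def using assms by blast
  have xw: "x \<in> ?w" "y \<in> ?w" unfolding bl_def using assms refl0 nonneg by auto
  have com: "?w \<subseteq> C" if CC: "C \<in> Balls" "x \<in> C" "y \<in> C" for C
  proof -
    obtain c z where cz: "c \<in> S" "C = bl c (D c z)" using CC(1) unfolding Balls_def by blast
    have "C = bl x (D c z)" using cz CC bl_recenter[OF cz(1) assms(1)] by (auto simp: bl_def)
    then have "D x y \<le> D c z" using CC by (auto simp: bl_def)
    then show ?thesis using \<open>C = bl x (D c z)\<close> by (auto simp: bl_def)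
  qed
  have "lcaG par {x} {y} ?w"
    unfolding lcaG_def using anc_eq single_Ball assms wB xw com by auto
  moreover have "D x y = diam ?w"
  proof -
    have "D x y \<le> diam ?w" using diam_ge[OF bl_sub xw] .
    moreover obtain a b where ab: "a \<in> ?w" "b \<in> ?w" "diam ?w = D a b"
      using diam_attained[OF bl_sub] xw by blast
    have "D a b \<le> max (D a x) (D x b)" using ab assms ultr bl_sub by blast
    then have "D a b \<le> D x y" using ab sym[of a x] assms bl_sub unfolding bl_def by auto
    ultimately show ?thesis using ab by simp
  qed
  ultimately show ?thesis by blast
qed

lemma hst: "hst_metric 1 S D"
proof (rule transport[OF rt])
  show "bij_betw (\<lambda>x. {x}) S {v. leafG Balls S par v}"
    unfolding leaf_iff bij_betw_def inj_on_def by auto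
  show "\<forall>v\<in>Balls. 0 \<le> diam v \<and> (diam v = 0) = leafG Balls S par v"
  proof
    fix B assume B: "B \<in> Balls"
    obtain a where a: "a \<in> B" using Balls_ne B by blast
    have aS: "a \<in> S" using a B Balls_sub by blast
    have "0 \<le> diam B" using diam_ge[OF Balls_sub[OF B] a a] refl0 aS by simp
    moreover have "diam B = 0 \<longleftrightarrow> (\<exists>a\<in>S. B = {a})"
    proof
      assume d0: "diam B = 0"
      have "B = {a}"
      proof (rule ccontr)
        assume "B \<noteq> {a}"
        then obtain b where b: "b \<in> B" "b \<noteq> a" using a by blast
        have "D a b > 0" using pos aS b Balls_sub[OF B] by blast
        then show False using diam_ge[OF Balls_sub[OF B] a b(1)] d0 by simp
      qed
      then show "\<exists>a\<in>S. B = {a}" using aS by blast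
    next
      assume "\<exists>a\<in>S. B = {a}"
      then obtain c where "c \<in> S" "B = {c}" by blast
      then show "diam B = 0" unfolding diam_def using refl0 by simp
    qed
    ultimately show "0 \<le> diam B \<and> (diam B = 0) = leafG Balls S par B" using leaf_iff by simp
  qed
  show "\<forall>v\<in>Balls. v \<noteq> S \<longrightarrow> diam v \<le> diam (par v) / 1"
  proof (intro ballI impI)
    fix v assume v: "v \<in> Balls" "v \<noteq> S"
    show "diam v \<le> diam (par v) / 1"
      using diam_mono[OF _ Balls_sub[OF par_props(1)[OF v]] Balls_ne[OF v(1)]] par_props(2)[OF v] by auto
  qed
  show "\<forall>x\<in>S. \<forall>y\<in>S. \<exists>w. lcaG par {x} {y} w \<and> D x y = diam w"
    using lca_ball by blast
qed

end



definition nn :: "('a \<Rightarrow> 'a \<Rightarrow> real) \<Rightarrow> 'a \<Rightarrow> 'a list \<Rightarrow> 'a" where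
  "nn d x ys = (SOME y. y \<in> set ys \<and> (\<forall>z\<in>set ys. d x y \<le> d x z))"

lemma nn_prop: assumes "ys \<noteq> []"
  shows "nn d x ys \<in> set ys \<and> (\<forall>z\<in>set ys. d x (nn d x ys) \<le> d x z)"
proof -
  have "\<exists>y. y \<in> set ys \<and> (\<forall>z\<in>set ys. d x y \<le> d x z)"
  proof -
    have "Min (d x ` set ys) \<in> d x ` set ys" using assms by (intro Min_in) auto
    then obtain y where "y \<in> set ys" "d x y = Min (d x ` set ys)" by auto
    then show ?thesis by (metis List.finite_set Min_le finite_imageI imageI)
  qed
  then show ?thesis unfolding nn_def by (rule someI_ex)
qed

fun F :: "('a \<Rightarrow> 'a \<Rightarrow> real) \<Rightarrow> 'a list \<Rightarrow> 'a \<Rightarrow> 'a \<Rightarrow> real" where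
  "F d [] u v = 0"
| "F d (x # ys) u v = (if u \<in> set ys \<and> v \<in> set ys then F d ys u v
     else if u = v then 0
     else if u = x then max (2 ^ (length ys + 1) * d x (nn d x ys)) (F d ys (nn d x ys) v)
     else max (2 ^ (length ys + 1) * d x (nn d x ys)) (F d ys (nn d x ys) u))"

definition invar :: "('a \<Rightarrow> 'a \<Rightarrow> real) \<Rightarrow> 'a list \<Rightarrow> bool" where
  "invar d ys \<longleftrightarrow> ultra (set ys) (F d ys) \<and>
     (\<forall>u\<in>set ys. \<forall>v\<in>set ys. d u v \<le> (1 - 1 / 2 ^ length ys) * F d ys u v \<and>
        F d ys u v \<le> 2 ^ length ys * d u v)"

lemma step:
  assumes ms: "Metric_space M d" and I: "invar d ys" and ne: "ys \<noteq> []"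
    and sub: "set ys \<subseteq> M" and xM: "x \<in> M" and xn: "x \<notin> set ys"
  shows "invar d (x # ys)"
proof -
  interpret ms: Metric_space M d by (rule ms)
  interpret U: ultra "set ys" "F d ys" using I by (simp add: invar_def)
  define y where "y = nn d x ys"
  have y: "y \<in> set ys" "\<And>z. z \<in> set ys \<Longrightarrow> d x y \<le> d x z" using nn_prop[OF ne] y_def by auto
  define m where "m = length ys"
  define K :: real where "K = 2 ^ (m + 1)"
  define \<delta> where "\<delta> = d x y"
  have yM: "y \<in> M" using y sub by blast
  have xy: "x \<noteq> y" using xn y by auto
  have dpos: "\<delta> > 0" using xM yM xy ms.mdist_pos_less by (simp add: \<delta>_def)
  have m1: "m \<ge> 1" using ne m_def by (cases ys) auto
  have "(2::real)^1 \<le> 2^m" by (rule power_increasing) (use m1 in auto)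
  then have Kge: "K \<ge> 4" and K2: "K = 2 * 2^m" unfolding K_def by auto
  define DD where "DD = F d (x # ys)"
  have Fold: "DD u v = F d ys u v" if "u \<in> set ys" "v \<in> set ys" for u v using that by (simp add: DD_def)
  have Fxx: "DD x x = 0" using xn by (simp add: DD_def)
  have Fxv: "DD x v = max (K * \<delta>) (F d ys y v)" if "v \<in> set ys" for v
    using that xn by (auto simp: K_def m_def \<delta>_def y_def DD_def)
  have Fvx: "DD v x = max (K * \<delta>) (F d ys y v)" if "v \<in> set ys" for v
    using that xn by (auto simp: K_def m_def \<delta>_def y_def DD_def)
  have Kd: "K * \<delta> > 0" using Kge dpos by simp
  have ultra: "ultra (set (x # ys)) DD"
  proof
    show "finite (set (x # ys))" by simp
    show "set (x # ys) \<noteq> {}" by simp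
    fix a b c assume a: "a \<in> set (x # ys)" and b: "b \<in> set (x # ys)" and c: "c \<in> set (x # ys)"
    show "DD a a = 0" using a Fxx Fold U.refl0 by auto
    show "a \<noteq> b \<Longrightarrow> DD a b > 0" using a b Fxv Fvx Fold U.pos Kd by auto
    show "DD a b = DD b a" using a b Fxv Fvx Fold U.sym by auto
    show "DD a c \<le> max (DD a b) (DD b c)"
    proof (cases "a = x")
      case ax: True
      show ?thesis
      proof (cases "b = x")
        case bx: True
        then show ?thesis using ax by simp
      next
        case bn: False
        then have bS: "b \<in> set ys" using b by simp
        show ?thesis
        proof (cases "c = x")
          case True then show ?thesis using ax Fxx Fxv[OF bS] Fvx[OF bS] Kd by auto
        next
          case False
          then have cS: "c \<in> set ys" using c by simp
          show ?thesis using ax Fxv[OF bS] Fxv[OF cS] Fold[OF bS cS] U.ultr[OF y(1) bS cS] by auto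
        qed
      qed
    next
      case an: False
      then have aS: "a \<in> set ys" using a by simp
      show ?thesis
      proof (cases "b = x")
        case bx: True
        show ?thesis
        proof (cases "c = x")
          case True then show ?thesis using bx Fvx[OF aS] Fxx by auto
        next
          case False
          then have cS: "c \<in> set ys" using c by simp
          show ?thesis using bx Fvx[OF aS] Fxv[OF cS] Fold[OF aS cS] U.ultr[OF aS y(1) cS]
            U.sym[OF aS y(1)] by auto
        qed
      next
        case bn: False
        then have bS: "b \<in> set ys" using b by simp
        show ?thesis
        proof (cases "c = x")
          case True then show ?thesis using Fvx[OF aS] Fvx[OF bS] Fold[OF aS bS]
            U.ultr[OF y(1) bS aS] U.sym[OF aS bS] U.sym[OF y(1) aS] U.sym[OF y(1) bS] by auto
        next
          case False
          then have cS: "c \<in> set ys" using c by simp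
          show ?thesis using Fold aS bS cS U.ultr[OF aS bS cS] by auto
        qed
      qed
    qed
  qed
  have cdef: "1 / 2 ^ m = 2 / (K::real)" using K2 by simp
  have new: "d x v \<le> (1 - 1 / K) * max (K * \<delta>) (F d ys y v) \<and> max (K * \<delta>) (F d ys y v) \<le> K * d x v"
    if vS: "v \<in> set ys" for v
  proof -
    define Mx where "Mx = max (K * \<delta>) (F d ys y v)"
    have vM: "v \<in> M" using vS sub by blast
    have old: "d y v \<le> (1 - 2 / K) * F d ys y v" "F d ys y v \<le> 2 ^ m * d y v"
      using I y(1) vS cdef by (auto simp: invar_def m_def)
    have tri: "d x v \<le> \<delta> + d y v" using ms.triangle[OF xM yM vM] \<delta>_def by simp
    have c0: "1 - 2 / K \<ge> 0" using Kge by (simp add: field_simps)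
    have "(1 - 2 / K) * F d ys y v \<le> (1 - 2 / K) * Mx" using c0 by (intro mult_left_mono) (auto simp: Mx_def)
    moreover have "\<delta> \<le> Mx / K" using Kge by (simp add: Mx_def field_simps)
    moreover have "(1 - 2 / K) * Mx = Mx - 2 * (Mx / K)" "(1 - 1 / K) * Mx = Mx - Mx / K"
      by (simp_all add: algebra_simps)
    moreover have "Mx / K \<ge> 0" using Kge Kd by (simp add: Mx_def)
    ultimately have A: "d x v \<le> (1 - 1 / K) * Mx" using tri old by linarith
    have dv: "\<delta> \<le> d x v" using y(2)[OF vS] \<delta>_def by simp
    have B1: "K * \<delta> \<le> K * d x v" using dv Kge by simp
    have "d y v \<le> d y x + d x v" using ms.triangle[OF yM xM vM] .
    then have "d y v \<le> 2 * d x v" using dv ms.commute[of y x] \<delta>_def by simp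
    then have "2 ^ m * d y v \<le> 2 ^ m * (2 * d x v)" by (intro mult_left_mono) auto
    then have "F d ys y v \<le> 2 ^ m * (2 * d x v)" using old(2) by linarith
    then have B2: "F d ys y v \<le> K * d x v" using K2 by (simp add: algebra_simps)
    show ?thesis using A B1 B2 Mx_def by simp
  qed
  have Km: "2 ^ length (x # ys) = K" by (simp add: K_def m_def)
  have main: "\<forall>u\<in>set (x # ys). \<forall>v\<in>set (x # ys). d u v \<le> (1 - 1 / K) * DD u v \<and> DD u v \<le> K * d u v"
  proof (intro ballI)
    fix u v assume u: "u \<in> set (x # ys)" and v: "v \<in> set (x # ys)"
    show "d u v \<le> (1 - 1 / K) * DD u v \<and> DD u v \<le> K * d u v"
    proof (cases "u = x")
      case ux: True
      show ?thesis
      proof (cases "v = x")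
        case True then show ?thesis using ux Fxx xM by simp
      next
        case False then have vS: "v \<in> set ys" using v by simp
        show ?thesis using new[OF vS] Fxv[OF vS] ux by simp
      qed
    next
      case un: False then have uS: "u \<in> set ys" using u by simp
      show ?thesis
      proof (cases "v = x")
        case True then show ?thesis using new[OF uS] Fvx[OF uS] ms.commute[of u x] by simp
      next
        case False then have vS: "v \<in> set ys" using v by simp
        have o: "d u v \<le> (1 - 2 / K) * F d ys u v" "F d ys u v \<le> 2 ^ m * d u v"
          using I uS vS cdef by (auto simp: invar_def m_def)
        have "(1 - 2 / K) * F d ys u v \<le> (1 - 1 / K) * F d ys u v"
          using U.nonneg[OF uS vS] Kge by (intro mult_right_mono) (auto simp: field_simps)
        moreover have "2 ^ m * d u v \<le> K * d u v" using K2 by simp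
        ultimately show ?thesis using o Fold[OF uS vS] by simp
      qed
    qed
  qed
  show ?thesis unfolding invar_def Km DD_def[symmetric] using ultra main by blast
qed

lemma all_inv:
  assumes ms: "Metric_space M d"
  shows "distinct ys \<Longrightarrow> set ys \<subseteq> M \<Longrightarrow> ys \<noteq> [] \<Longrightarrow> invar d ys"
proof (induction ys)
  case Nil then show ?case by simp
next
  case (Cons x ys)
  show ?case
  proof (cases "ys = []")
    case True
    have xM: "x \<in> M" using Cons by simp
    have u: "ultra {x} (F d [x])" by (rule ultra.intro) auto
    show ?thesis using True u xM Metric_space.mdist_zero[OF ms] by (simp add: invar_def)
  next
    case False
    then show ?thesis using step[OF ms Cons.IH] Cons.prems by auto
  qed
qed

theorem mainTheorem15:
  fixes M :: "'a set" and d :: "'a \<Rightarrow> 'a \<Rightarrow> real"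
  assumes "Metric_space M d"
  shows "\<exists>A :: 'a list \<Rightarrow> 'a \<Rightarrow> 'a \<Rightarrow> real.
    \<forall>xs. set xs \<subseteq> M \<and> distinct xs \<and> xs \<noteq> [] \<longrightarrow>
      is_HST_metric (set xs) (A xs) \<and>
      (\<forall>x\<in>M. x \<notin> set xs \<longrightarrow>
         (\<forall>u\<in>set xs. \<forall>v\<in>set xs. A (xs @ [x]) u v = A xs u v)) \<and>
      (\<forall>u\<in>set xs. \<forall>v\<in>set xs. d u v \<le> A xs u v \<and> A xs u v \<le> 2 ^ length xs * d u v)"
proof (intro exI[of _ "\<lambda>xs. F d (rev xs)"] allI impI conjI ballI)
  fix xs :: "'a list" assume h: "set xs \<subseteq> M \<and> distinct xs \<and> xs \<noteq> []"
  have I: "invar d (rev xs)" using all_inv[OF assms, of "rev xs"] h by simp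
  then interpret U: ultra "set xs" "F d (rev xs)" by (simp add: invar_def)
  show "is_HST_metric (set xs) (F d (rev xs))"
    unfolding is_HST_metric_def using U.hst by auto
  fix u v assume u: "u \<in> set xs" and v: "v \<in> set xs"
  have b: "d u v \<le> (1 - 1 / 2 ^ length xs) * F d (rev xs) u v" "F d (rev xs) u v \<le> 2 ^ length xs * d u v"
    using I u v by (auto simp: invar_def)
  have "(1 - 1 / 2 ^ length xs) * F d (rev xs) u v \<le> 1 * F d (rev xs) u v"
    using U.nonneg[OF u v] by (intro mult_right_mono) auto
  then show "d u v \<le> F d (rev xs) u v" using b by simp
  show "F d (rev xs) u v \<le> 2 ^ length xs * d u v" using b by simp
next
  fix xs x u v assume "set xs \<subseteq> M \<and> distinct xs \<and> xs \<noteq> []" "x \<in> M" "x \<notin> set xs"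
    "u \<in> set xs" "v \<in> set xs"
  then show "F d (rev (xs @ [x])) u v = F d (rev xs) u v" by simp
qed

end
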